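(* Let $\alpha>0$, $\alpha\ne1$. For unitaries $U\in\mathcal{U}(d_1)$ and $V\in\mathcal{U}(d_2)$, $H_\alpha(U\otimes V)=H_\alpha(U)+H_\alpha(V)-(\alpha-1)H_\alpha(U)H_\alpha(V)$, where $H_\alpha(U)$, $H_\alpha(V)$ are computed with the displacement operators of $\mathbb{C}^{d_1}$ and $\mathbb{C}^{d_2}$ respectively, and $H_\alpha(U\otimes V)$ with the displacement operators $D_{\mathbf a_1}\otimes D_{\mathbf a_2}$ of $\mathbb{C}^{d_1}\otimes\mathbb{C}^{d_2}$.
   Context: For a Hilbert space $\mathbb{C}^{d}$ with a fixed family of Weyl–Heisenberg displacement operators $\{D_{\mathbf a}\}$ indexed by a set of size $d^2$ (e.g. $d=d_L^n$, $D_{\mathbf a}=D_{\mathbf a_1}\otimes\cdots\otimes D_{\mathbf a_n}$ with single-qudit $D_{(a_1,a_2)}=\tau^{a_1a_2}X^{a_1}Z^{a_2}$, $Z|k\rangle=e^{2\pi ik/d_L}|k\rangle$, $X|k\rangle=|k+1\rangle$, $\tau=-e^{i\pi/d_L}$), and a unitary $U$ on $\mathbb{C}^d$, set $\mathfrak{C}_{\mathbf{ab}}(U)=\frac1d\operatorname{tr}(D_{\mathbf a}^\dagger UD_{\mathbf b}U^\dagger)$, $\mathfrak{D}_{\mathbf{ab}}(U)=|\mathfrak{C}_{\mathbf{ab}}(U)|^2$, and the $\alpha$-Clifford entropy $H_\alpha(U)=\frac{1}{\alpha-1}\Big(1-\frac{1}{d^2}\sum_{\mathbf a,\mathbf b}\mathfrak{D}_{\mathbf{ab}}(U)^\alpha\Big)$.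 *)

theory Defs
  imports Complex_Main
begin

text \<open>Square complex matrices are represented as functions nat => nat => complex;
  the dimension is carried explicitly and only entries with indices below it matter.\<close>

type_synonym cmat = "nat \<Rightarrow> nat \<Rightarrow> complex"

definition mmult :: "nat \<Rightarrow> cmat \<Rightarrow> cmat \<Rightarrow> cmat" where
  "mmult n A B = (\<lambda>i j. \<Sum>k<n. A i k * B k j)"

definition adj :: "cmat \<Rightarrow> cmat" where
  "adj A = (\<lambda>i j. cnj (A j i))"

definition mtrace :: "nat \<Rightarrow> cmat \<Rightarrow> complex" where
  "mtrace n A = (\<Sum>i<n. A i i)"

definition idm :: cmat where
  "idm = (\<lambda>i j. if i = j then 1 else 0)"

definition unitary_mat :: "nat \<Rightarrow> cmat \<Rightarrow> bool" where
  "unitary_mat n U \<longleftrightarrow>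
     (\<forall>i<n. \<forall>j<n. mmult n U (adj U) i j = idm i j \<and> mmult n (adj U) U i j = idm i j)"

text \<open>Kronecker product A \<otimes> B, where B has dimension d2
  (basis |i1> \<otimes> |i2> is indexed by i1 * d2 + i2).\<close>
definition kron :: "nat \<Rightarrow> cmat \<Rightarrow> cmat \<Rightarrow> cmat" where
  "kron d2 A B = (\<lambda>i j. A (i div d2) (j div d2) * B (i mod d2) (j mod d2))"

text \<open>Single-qudit displacement operator D_(a1,a2) = tau^(a1 a2) X^a1 Z^a2 on C^dL,
  with Z|k> = omega^k |k>, X|k> = |k+1 mod dL>, omega = exp(2 pi i/dL), tau = -exp(i pi/dL).
  Entry (i,j): X^a1 Z^a2 |j> = omega^(a2 j) |j + a1 mod dL>.\<close>
definition disp1 :: "nat \<Rightarrow> nat \<times> nat \<Rightarrow> cmat" where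
  "disp1 dL a = (\<lambda>i j.
     if i = (j + fst a) mod dL
     then (- exp (\<i> * of_real pi / of_nat dL)) ^ (fst a * snd a)
          * exp (2 * of_real pi * \<i> / of_nat dL) ^ (snd a * j)
     else 0)"

fun disp :: "nat list \<Rightarrow> (nat \<times> nat) list \<Rightarrow> cmat" where
  "disp [] [] = idm"
| "disp (dL # ds) (a # as) = kron (prod_list ds) (disp1 dL a) (disp ds as)"
| "disp _ _ = (\<lambda>i j. 0)"

definition disp_idx :: "nat list \<Rightarrow> (nat \<times> nat) list set" where
  "disp_idx ds = {as. length as = length ds \<and>
                      (\<forall>k<length ds. fst (as ! k) < ds ! k \<and> snd (as ! k) < ds ! k)}"

definition cliff_coeff :: "nat list \<Rightarrow> (nat \<times> nat) list \<Rightarrow> (nat \<times> nat) list \<Rightarrow> cmat \<Rightarrow> complex" where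
  "cliff_coeff ds a b U = (let d = prod_list ds in
     mtrace d (mmult d (mmult d (adj (disp ds a)) U) (mmult d (disp ds b) (adj U))) / of_nat d)"

definition cliff_dist :: "nat list \<Rightarrow> (nat \<times> nat) list \<Rightarrow> (nat \<times> nat) list \<Rightarrow> cmat \<Rightarrow> real" where
  "cliff_dist ds a b U = (cmod (cliff_coeff ds a b U))\<^sup>2"

definition cliff_entropy :: "real \<Rightarrow> nat list \<Rightarrow> cmat \<Rightarrow> real" where
  "cliff_entropy \<alpha> ds U = (let d = real (prod_list ds) in
     (1 / (\<alpha> - 1)) * (1 - (1 / d\<^sup>2) *
       (\<Sum>a\<in>disp_idx ds. \<Sum>b\<in>disp_idx ds. cliff_dist ds a b U powr \<alpha>)))"

end

theory Submission
  imports Defs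
begin

lemma sum_mult_idx:
  fixes f :: "nat \<Rightarrow> 'a::comm_monoid_add"
  shows "(\<Sum>k<m*n. f k) = (\<Sum>k1<m. \<Sum>k2<n. f (k1*n+k2))"
proof -
  have "(\<Sum>p\<in>{..<m}\<times>{..<n}. f (fst p * n + snd p)) = (\<Sum>k<m*n. f k)"
  proof (rule sum.reindex_bij_witness[where i="\<lambda>k. (k div n, k mod n)" and j="\<lambda>p. fst p * n + snd p"])
    fix a assume "a \<in> {..<m} \<times> {..<n}"
    then show "(\<lambda>k. (k div n, k mod n)) (fst a * n + snd a) = a" by (auto simp: prod_eq_iff)
  next
    fix a assume "a \<in> {..<m} \<times> {..<n}"
    then obtain x y where "a = (x,y)" "x < m" "y < n" by auto
    then have "(x+1)*n \<le> m*n" by (intro mult_le_mono1) simp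
    then have "x*n + y < m*n" using \<open>y<n\<close> by simp
    then show "fst a * n + snd a \<in> {..<m*n}" using \<open>a=(x,y)\<close> by auto
  next
    fix k assume k: "k \<in> {..<m*n}"
    then have "n > 0" by (cases "n=0") auto
    then show "fst (k div n, k mod n) * n + snd (k div n, k mod n) = k" by simp
  next
    fix k assume k: "k \<in> {..<m*n}"
    then have "n > 0" by (cases "n=0") auto
    moreover have "k div n < m" using k by (simp add: div_less_iff_less_mult mult.commute \<open>n>0\<close>)
    ultimately show "(k div n, k mod n) \<in> {..<m} \<times> {..<n}" by simp
  qed simp
  then have "(\<Sum>k<m*n. f k) = (\<Sum>p\<in>{..<m}\<times>{..<n}. f (fst p * n + snd p))" by simp
  also have "\<dots> = (\<Sum>k1<m. \<Sum>k2<n. f (k1*n+k2))"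
    by (simp add: sum.cartesian_product split_def)
  finally show ?thesis .
qed

lemma kron_mult: "mmult (m*n) (kron n A B) (kron n C D) = kron n (mmult m A C) (mmult n B D)"
proof (intro ext)
  fix i j
  show "mmult (m*n) (kron n A B) (kron n C D) i j = kron n (mmult m A C) (mmult n B D) i j"
  proof (cases "n = 0")
    case True then show ?thesis by (simp add: mmult_def kron_def)
  next
    case False
    have "mmult (m*n) (kron n A B) (kron n C D) i j
       = (\<Sum>k1<m. \<Sum>k2<n. kron n A B i (k1*n+k2) * kron n C D (k1*n+k2) j)"
      unfolding mmult_def by (rule sum_mult_idx)
    also have "\<dots> = (\<Sum>k1<m. \<Sum>k2<n. (A (i div n) k1 * C k1 (j div n)) * (B (i mod n) k2 * D k2 (j mod n)))"
      using False by (intro sum.cong refl) (simp add: kron_def mult_ac)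
    also have "\<dots> = kron n (mmult m A C) (mmult n B D) i j"
      by (simp add: kron_def mmult_def sum_product)
    finally show ?thesis .
  qed
qed

lemma kron_adj: "adj (kron n A B) = kron n (adj A) (adj B)"
  by (simp add: adj_def kron_def fun_eq_iff)

lemma kron_trace: "mtrace (m*n) (kron n A B) = mtrace m A * mtrace n B"
proof (cases "n = 0")
  case True then show ?thesis by (simp add: mtrace_def)
next
  case False
  have "mtrace (m*n) (kron n A B) = (\<Sum>k1<m. \<Sum>k2<n. kron n A B (k1*n+k2) (k1*n+k2))"
    unfolding mtrace_def by (rule sum_mult_idx)
  also have "\<dots> = (\<Sum>k1<m. \<Sum>k2<n. A k1 k1 * B k2 k2)"
    using False by (intro sum.cong refl) (simp add: kron_def)
  finally show ?thesis by (simp add: mtrace_def sum_product)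
qed

lemma kron_assoc: "kron (m*n) A (kron n B C) = kron n (kron m A B) C"
proof -
  have h1: "i div (m*n) = i div n div m" for i :: nat
    by (metis div_mult2_eq mult.commute)
  have h2: "(i mod (m*n)) div n = i div n mod m" for i :: nat
  proof (cases "n = 0")
    case False
    have "i mod (m*n) = n * (i div n mod m) + i mod n" using mod_mult2_eq[of i n m] by (simp add: mult.commute)
    then show ?thesis using False by simp
  qed simp
  have h3: "(i mod (m*n)) mod n = i mod n" for i :: nat
    by (metis dvd_triv_right mod_mod_cancel)
  show ?thesis by (simp add: kron_def fun_eq_iff h1 h2 h3 mult_ac)
qed

definition eqon :: "nat \<Rightarrow> cmat \<Rightarrow> cmat \<Rightarrow> bool" where
  "eqon n A B \<longleftrightarrow> (\<forall>i<n. \<forall>j<n. A i j = B i j)"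

lemma eqon_mmult: "eqon n A A' \<Longrightarrow> eqon n B B' \<Longrightarrow> eqon n (mmult n A B) (mmult n A' B')"
  by (simp add: eqon_def mmult_def)

lemma eqon_adj: "eqon n A A' \<Longrightarrow> eqon n (adj A) (adj A')"
  by (simp add: eqon_def adj_def)

lemma eqon_trace: "eqon n A A' \<Longrightarrow> mtrace n A = mtrace n A'"
  by (simp add: eqon_def mtrace_def)

lemma eqon_refl: "eqon n A A"
  by (simp add: eqon_def)

lemma eqon_kron: "eqon n B B' \<Longrightarrow> eqon (m*n) (kron n A B) (kron n A B')"
  by (cases "n = 0") (auto simp: eqon_def kron_def)

lemma disp_append:
  "length a1 = length ds1 \<Longrightarrow>
   eqon (prod_list ds1 * prod_list ds2) (disp (ds1@ds2) (a1@a2))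
        (kron (prod_list ds2) (disp ds1 a1) (disp ds2 a2))"
proof (induction ds1 arbitrary: a1)
  case Nil
  then show ?case by (auto simp: eqon_def kron_def idm_def)
next
  case (Cons dL ds a1)
  then obtain a as where a1: "a1 = a # as" "length as = length ds" by (cases a1) auto
  have "disp ((dL#ds)@ds2) (a1@a2) = kron (prod_list ds * prod_list ds2) (disp1 dL a) (disp (ds@ds2) (as@a2))"
    using a1 by simp
  moreover have "eqon (dL * (prod_list ds * prod_list ds2)) \<dots>
     (kron (prod_list ds * prod_list ds2) (disp1 dL a) (kron (prod_list ds2) (disp ds as) (disp ds2 a2)))"
    by (rule eqon_kron) (rule Cons.IH[OF a1(2)])
  moreover have "kron (prod_list ds * prod_list ds2) (disp1 dL a) (kron (prod_list ds2) (disp ds as) (disp ds2 a2))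
     = kron (prod_list ds2) (disp (dL#ds) a1) (disp ds2 a2)"
    using a1 by (simp add: kron_assoc)
  ultimately show ?case by (simp add: mult_ac)
qed

lemma coeff_append:
  assumes "length a1 = length ds1" "length b1 = length ds1"
  shows "cliff_coeff (ds1@ds2) (a1@a2) (b1@b2) (kron (prod_list ds2) U V)
       = cliff_coeff ds1 a1 b1 U * cliff_coeff ds2 a2 b2 V"
proof -
  define m where "m = prod_list ds1"
  define n where "n = prod_list ds2"
  have d: "prod_list (ds1@ds2) = m*n" by (simp add: m_def n_def)
  have ea: "eqon (m*n) (disp (ds1@ds2) (a1@a2)) (kron n (disp ds1 a1) (disp ds2 a2))"
    using disp_append[OF assms(1)] by (simp add: m_def n_def)
  have eb: "eqon (m*n) (disp (ds1@ds2) (b1@b2)) (kron n (disp ds1 b1) (disp ds2 b2))"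
    using disp_append[OF assms(2)] by (simp add: m_def n_def)
  let ?W = "kron n U V"
  have "mtrace (m*n) (mmult (m*n) (mmult (m*n) (adj (disp (ds1@ds2) (a1@a2))) ?W) (mmult (m*n) (disp (ds1@ds2) (b1@b2)) (adj ?W)))
      = mtrace (m*n) (mmult (m*n) (mmult (m*n) (adj (kron n (disp ds1 a1) (disp ds2 a2))) ?W) (mmult (m*n) (kron n (disp ds1 b1) (disp ds2 b2)) (adj ?W)))"
    by (intro eqon_trace eqon_mmult eqon_adj ea eb eqon_refl)
  also have "\<dots> = mtrace m (mmult m (mmult m (adj (disp ds1 a1)) U) (mmult m (disp ds1 b1) (adj U)))
      * mtrace n (mmult n (mmult n (adj (disp ds2 a2)) V) (mmult n (disp ds2 b2) (adj V)))"
    by (simp add: kron_adj kron_mult kron_trace)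
  finally show ?thesis
    unfolding cliff_coeff_def Let_def d by (simp add: m_def n_def)
qed

lemma dist_append:
  assumes "length a1 = length ds1" "length b1 = length ds1"
  shows "cliff_dist (ds1@ds2) (a1@a2) (b1@b2) (kron (prod_list ds2) U V)
       = cliff_dist ds1 a1 b1 U * cliff_dist ds2 a2 b2 V"
  unfolding cliff_dist_def coeff_append[OF assms] by (simp add: norm_mult power_mult_distrib)

lemma sum_prod_split:
  fixes f :: "'a \<Rightarrow> real"
  shows "(\<Sum>p\<in>A\<times>B. f (fst p) * g (snd p)) = sum f A * sum g B"
  by (simp add: sum_product sum.cartesian_product split_def)

lemma idx_append:
  "disp_idx (ds1@ds2) = (\<lambda>p. fst p @ snd p) ` (disp_idx ds1 \<times> disp_idx ds2)"
proof (intro set_eqI iffI)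
  fix as assume as: "as \<in> disp_idx (ds1@ds2)"
  let ?p = "(take (length ds1) as, drop (length ds1) as)"
  have "?p \<in> disp_idx ds1 \<times> disp_idx ds2"
  proof -
    have "take (length ds1) as \<in> disp_idx ds1"
    proof -
      have "length (take (length ds1) as) = length ds1" using as by (simp add: disp_idx_def)
      moreover have "fst (take (length ds1) as ! k) < ds1 ! k \<and> snd (take (length ds1) as ! k) < ds1 ! k"
        if "k < length ds1" for k
        using as that unfolding disp_idx_def
        by (auto dest!: spec[where x="k"] simp: nth_append)
      ultimately show ?thesis by (simp add: disp_idx_def)
    qed
    moreover have "drop (length ds1) as \<in> disp_idx ds2"
    proof -
      have "length (drop (length ds1) as) = length ds2" using as by (simp add: disp_idx_def)
      moreover have "fst (drop (length ds1) as ! k) < ds2 ! k \<and> snd (drop (length ds1) as ! k) < ds2 ! k"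
        if "k < length ds2" for k
        using as that unfolding disp_idx_def
        by (auto dest!: spec[where x="length ds1 + k"] simp: nth_append)
      ultimately show ?thesis by (simp add: disp_idx_def)
    qed
    ultimately show ?thesis by simp
  qed
  moreover have "as = fst ?p @ snd ?p" by simp
  ultimately show "as \<in> (\<lambda>p. fst p @ snd p) ` (disp_idx ds1 \<times> disp_idx ds2)" by blast
next
  fix as assume "as \<in> (\<lambda>p. fst p @ snd p) ` (disp_idx ds1 \<times> disp_idx ds2)"
  then obtain a1 a2 where "as = a1 @ a2" "a1 \<in> disp_idx ds1" "a2 \<in> disp_idx ds2" by auto
  then show "as \<in> disp_idx (ds1@ds2)"
    unfolding disp_idx_def by (auto simp: nth_append)
qed

lemma idx_inj: "inj_on (\<lambda>p. fst p @ snd p) (disp_idx ds1 \<times> disp_idx ds2)"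
  by (auto simp: inj_on_def disp_idx_def)

lemma sum_append:
  "(\<Sum>a\<in>disp_idx (ds1@ds2). \<Sum>b\<in>disp_idx (ds1@ds2).
      cliff_dist (ds1@ds2) a b (kron (prod_list ds2) U V) powr \<alpha>)
   = (\<Sum>a\<in>disp_idx ds1. \<Sum>b\<in>disp_idx ds1. cliff_dist ds1 a b U powr \<alpha>)
   * (\<Sum>a\<in>disp_idx ds2. \<Sum>b\<in>disp_idx ds2. cliff_dist ds2 a b V powr \<alpha>)"
  (is "?L = ?R")
proof -
  let ?I = "disp_idx ds1 \<times> disp_idx ds2"
  let ?g = "\<lambda>p::(nat\<times>nat) list \<times> (nat\<times>nat) list. fst p @ snd p"
  let ?G1 = "\<lambda>a b. cliff_dist ds1 a b U powr \<alpha>"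
  let ?G2 = "\<lambda>a b. cliff_dist ds2 a b V powr \<alpha>"
  have "?L = (\<Sum>p\<in>?I. \<Sum>q\<in>?I. cliff_dist (ds1@ds2) (?g p) (?g q) (kron (prod_list ds2) U V) powr \<alpha>)"
    unfolding idx_append by (simp add: sum.reindex[OF idx_inj])
  also have "\<dots> = (\<Sum>p\<in>?I. \<Sum>q\<in>?I. ?G1 (fst p) (fst q) * ?G2 (snd p) (snd q))"
  proof (intro sum.cong refl)
    fix p q assume "p \<in> ?I" "q \<in> ?I"
    then have "length (fst p) = length ds1" "length (fst q) = length ds1"
      by (auto simp: disp_idx_def)
    then show "cliff_dist (ds1@ds2) (?g p) (?g q) (kron (prod_list ds2) U V) powr \<alpha>
       = ?G1 (fst p) (fst q) * ?G2 (snd p) (snd q)"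
      unfolding dist_append[OF \<open>length (fst p) = length ds1\<close> \<open>length (fst q) = length ds1\<close>]
      by (simp add: powr_mult)
  qed
  also have "\<dots> = (\<Sum>p\<in>?I. (\<Sum>b\<in>disp_idx ds1. ?G1 (fst p) b) * (\<Sum>b\<in>disp_idx ds2. ?G2 (snd p) b))"
    by (intro sum.cong refl) (rule sum_prod_split[where f="\<lambda>b. ?G1 (fst p) b" and g="\<lambda>b. ?G2 (snd p) b" for p])
  also have "\<dots> = ?R"
    by (rule sum_prod_split)
  finally show ?thesis .
qed

theorem theorem3:
  fixes \<alpha> :: real and ds1 ds2 :: "nat list" and U V :: cmat
  assumes "\<alpha> > 0" and "\<alpha> \<noteq> 1"
    and "\<forall>dL\<in>set ds1. dL > 0" and "\<forall>dL\<in>set ds2. dL > 0"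
    and "unitary_mat (prod_list ds1) U" and "unitary_mat (prod_list ds2) V"
  shows "cliff_entropy \<alpha> (ds1 @ ds2) (kron (prod_list ds2) U V)
         = cliff_entropy \<alpha> ds1 U + cliff_entropy \<alpha> ds2 V
           - (\<alpha> - 1) * cliff_entropy \<alpha> ds1 U * cliff_entropy \<alpha> ds2 V"
proof -
  define S1 where "S1 = (\<Sum>a\<in>disp_idx ds1. \<Sum>b\<in>disp_idx ds1. cliff_dist ds1 a b U powr \<alpha>)"
  define S2 where "S2 = (\<Sum>a\<in>disp_idx ds2. \<Sum>b\<in>disp_idx ds2. cliff_dist ds2 a b V powr \<alpha>)"
  define m where "m = real (prod_list ds1)"
  define n where "n = real (prod_list ds2)"
  have a: "\<alpha> - 1 \<noteq> 0" using assms(2) by simp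
  have "cliff_entropy \<alpha> (ds1 @ ds2) (kron (prod_list ds2) U V) = (1 / (\<alpha> - 1)) * (1 - (1/m\<^sup>2 * S1) * (1/n\<^sup>2 * S2))"
    unfolding cliff_entropy_def Let_def sum_append S1_def S2_def m_def n_def
    by (simp add: power_mult_distrib)
  moreover have "cliff_entropy \<alpha> ds1 U = (1 / (\<alpha> - 1)) * (1 - 1/m\<^sup>2 * S1)"
    unfolding cliff_entropy_def Let_def S1_def m_def by simp
  moreover have "cliff_entropy \<alpha> ds2 V = (1 / (\<alpha> - 1)) * (1 - 1/n\<^sup>2 * S2)"
    unfolding cliff_entropy_def Let_def S2_def n_def by simp
  moreover have "\<And>A B::real. (1 / (\<alpha> - 1)) * (1 - A * B) = (1 / (\<alpha> - 1)) * (1 - A) + (1 / (\<alpha> - 1)) * (1 - B)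
     - (\<alpha> - 1) * ((1 / (\<alpha> - 1)) * (1 - A)) * ((1 / (\<alpha> - 1)) * (1 - B))"
  proof -
    fix A B :: real
    define c where "c = 1 / (\<alpha> - 1)"
    have c: "(\<alpha> - 1) * c = 1" using a by (simp add: c_def)
    have "(\<alpha> - 1) * (c * (1 - A)) * (c * (1 - B)) = ((\<alpha> - 1) * c) * (c * ((1 - A) * (1 - B)))"
      by (simp only: mult_ac)
    also have "\<dots> = c * ((1 - A) * (1 - B))" using c by simp
    finally have e: "(\<alpha> - 1) * (c * (1 - A)) * (c * (1 - B)) = c * ((1 - A) * (1 - B))" .
    show "c * (1 - A * B) = c * (1 - A) + c * (1 - B) - (\<alpha> - 1) * (c * (1 - A)) * (c * (1 - B))"
      unfolding e by (simp add: algebra_simps)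
  qed
  ultimately show ?thesis by metis
qed

end
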